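(* Write $\dfrac{(q;q)_\infty^3}{(q^3;q^3)_\infty^2}=\sum_{n\ge0}a_nq^n$. Then for all $n\ge0$: $a_n>0$ if $n\equiv0\pmod3$, $a_n<0$ if $n\equiv1\pmod3$, and $a_n=0$ if $n\equiv2\pmod3$.
   Context: For $|q|<1$, $(a;q)_\infty=\prod_{k\ge0}(1-aq^k)$. *)

theory Defs
  imports "HOL-Analysis.Analysis"
begin

definition qpoch :: "complex \<Rightarrow> complex \<Rightarrow> complex" where
  "qpoch a q = (\<Prod>k. 1 - a * q ^ k)"

end

theory Submission
  imports Defs
begin

no_notation vec_nth (infixl "$" 90)
notation fps_nth (infixl "$" 75)

definition T :: "nat \<Rightarrow> nat" where "T k = k*(k+1) div 2"
definition pe :: "int \<Rightarrow> nat" where "pe j = nat (j*(3*j+1) div 2)"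
definition sg :: "int \<Rightarrow> 'a::comm_ring_1" where "sg j = (if even j then 1 else -1)"

lemma T_Suc: "T (Suc k) = T k + k + 1"
proof -
  have "Suc k * (Suc k + 1) = k*(k+1) + 2*(k+1)" by (simp add: algebra_simps)
  then show ?thesis unfolding T_def by simp
qed

lemma pe_2: "2 * int (pe j) = j*(3*j+1)"
proof -
  have "even (j*(3*j+1))" by auto
  moreover have "j*(3*j+1) \<ge> 0"
    by (cases "j \<ge> 0") (auto simp: mult_nonneg_nonneg mult_nonpos_nonpos)
  ultimately show ?thesis unfolding pe_def by auto
qed

definition shS :: "nat \<Rightarrow> 'a::comm_ring_1 \<Rightarrow> 'a" where
  "shS n q = (\<Sum>k\<le>n. (-1)^k * q^(n*k + T k) * (\<Prod>i\<in>{k+1..n}. 1 - q^i))"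
definition shP :: "nat \<Rightarrow> 'a::comm_ring_1 \<Rightarrow> 'a" where
  "shP n q = (\<Sum>j\<in>{-int n..int n}. sg j * q^(pe j))"

lemma shS_step:
  fixes q :: "'a::comm_ring_1"
  shows "shS (Suc n) q = shS n q + (-1)^(n+1) * (q^(n*(n+1)+T(n+1)) + q^((n+1)*(n+1) + T(n+1)))"
proof -
  define h where "h k = (-1)^(Suc k) * q^(n*k + T k) * (\<Prod>i\<in>{k..n}. 1 - q^i)" for k
  define f where "f m k = (-1)^k * q^(m*k + T k) * (\<Prod>i\<in>{k+1..m}. 1 - q^i)" for m k
  have step: "f (Suc n) k = f n k + (h k - h (Suc k))" if "k \<le> n" for k
  proof -
    define P where "P = (\<Prod>i\<in>{k+1..n}. 1 - q^i)"
    define e where "e = n*k + T k"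
    have P1: "(\<Prod>i\<in>{k+1..Suc n}. 1 - q^i) = P * (1 - q^(Suc n))"
      unfolding P_def using that by (simp add: prod.cl_ivl_Suc)
    have P2: "(\<Prod>i\<in>{k..n}. 1 - q^i) = (1 - q^k) * P"
      unfolding P_def using that by (simp add: prod.atLeast_Suc_atMost)
    have P3: "(\<Prod>i\<in>{Suc k..n}. 1 - q^i) = P" unfolding P_def by simp
    have e1: "Suc n * k + T k = e + k" unfolding e_def by simp
    have e2: "n * Suc k + T (Suc k) = e + n + k + 1" unfolding e_def by (simp add: T_Suc)
    show ?thesis unfolding f_def h_def P1 P2 P3 e1 e2 e_def[symmetric]
      by (simp only: power_add) (simp add: algebra_simps P3)
  qed
  have "shS (Suc n) q = (\<Sum>k\<le>Suc n. f (Suc n) k)" unfolding shS_def f_def by simp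
  also have "\<dots> = (\<Sum>k\<le>n. f (Suc n) k) + f (Suc n) (Suc n)" by simp
  also have "(\<Sum>k\<le>n. f (Suc n) k) = (\<Sum>k\<le>n. f n k) + (\<Sum>k<Suc n. h k - h (Suc k))"
    using step by (simp add: sum.distrib lessThan_Suc_atMost)
  also have "(\<Sum>k<Suc n. h k - h (Suc k)) = h 0 - h (Suc n)"
    by (rule sum_lessThan_telescope')
  also have "(\<Sum>k\<le>n. f n k) = shS n q" unfolding shS_def f_def by simp
  also have "h 0 = 0" unfolding h_def by (simp add: prod.atLeast_Suc_atMost[of 0 n])
  also have "h (Suc n) = (-1)^(n+2) * q^(n*(n+1) + T (n+1))" unfolding h_def by simp
  also have "f (Suc n) (Suc n) = (-1)^(n+1) * q^((n+1)*(n+1) + T (n+1))" unfolding f_def by simp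
  finally show ?thesis by (simp add: algebra_simps)
qed

lemma T_2: "2 * T k = k*(k+1)"
  unfolding T_def by simp

lemma T_2int: "2 * int (T k) = int k * (int k + 1)"
proof -
  have "int (2 * T k) = int (k*(k+1))" using T_2 by metis
  then show ?thesis by (simp add: algebra_simps)
qed

lemma sg_int: "(sg (int m) :: 'a::comm_ring_1) = (-1)^m"
  unfolding sg_def by (induction m) auto

lemma sg_uminus: "sg (- j) = sg j"
  unfolding sg_def by simp

lemma sg_add: "(sg (a + b) :: 'a::comm_ring_1) = sg a * sg b"
  unfolding sg_def by auto

lemma two_int_inj: "2 * int x = 2 * int y \<Longrightarrow> x = y" by simp

lemma pe_pos: "pe (int (Suc n)) = (n+1)*(n+1) + T (n+1)"
proof -
  have "2 * int (pe (int (Suc n))) = 2 * int ((n+1)*(n+1) + T (n+1))"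
    unfolding pe_2 using T_2int[of "n+1"] by (simp add: algebra_simps)
  then show ?thesis by (rule two_int_inj)
qed

lemma pe_neg: "pe (- int (Suc n)) = n*(n+1) + T (n+1)"
proof -
  have "2 * int (pe (- int (Suc n))) = 2 * int (n*(n+1) + T (n+1))"
    unfolding pe_2 using T_2int[of "n+1"] by (simp add: algebra_simps)
  then show ?thesis by (rule two_int_inj)
qed

lemma shanks: "shS n q = shP n (q::'a::comm_ring_1)"
proof (induction n)
  case 0
  then show ?case by (simp add: shS_def shP_def T_def pe_def sg_def)
next
  case (Suc n)
  have set: "{-int (Suc n)..int (Suc n)} = insert (- int (Suc n)) (insert (int (Suc n)) {-int n..int n})"
    by auto
  have "shP (Suc n) q = sg (- int (Suc n)) * q^(pe (- int (Suc n))) + (sg (int (Suc n)) * q^(pe (int (Suc n))) + shP n q)"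
    unfolding shP_def set by (subst sum.insert; simp)+
  also have "\<dots> = shP n q + (-1)^(n+1) * (q^(n*(n+1)+T(n+1)) + q^((n+1)*(n+1) + T(n+1)))"
    unfolding sg_uminus sg_int pe_pos pe_neg by (simp add: algebra_simps)
  finally show ?case using Suc shS_step[of n q] by simp
qed

definition wf :: "'x set \<Rightarrow> ('x \<Rightarrow> nat) \<Rightarrow> ('x \<Rightarrow> complex) \<Rightarrow> complex fps" where
  "wf A w c = Abs_fps (\<lambda>n. \<Sum>x\<in>{x\<in>A. w x = n}. c x)"

definition ffib :: "'x set \<Rightarrow> ('x \<Rightarrow> nat) \<Rightarrow> bool" where
  "ffib A w \<longleftrightarrow> (\<forall>n. finite {x\<in>A. w x = n})"

lemma wf_nth: "wf A w c $ n = (\<Sum>x\<in>{x\<in>A. w x = n}. c x)"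
  unfolding wf_def by simp

lemma ffib_le: assumes "ffib A w" shows "finite {x\<in>A. w x \<le> n}"
proof -
  have "{x\<in>A. w x \<le> n} = (\<Union>i\<in>{..n}. {x\<in>A. w x = i})" by auto
  then show ?thesis using assms unfolding ffib_def by simp
qed

lemma ffib_prod:
  assumes "ffib A w" "ffib B v"
  shows "ffib (A \<times> B) (\<lambda>p. w (fst p) + v (snd p))"
  unfolding ffib_def
proof
  fix n
  have "{p\<in>A \<times> B. w (fst p) + v (snd p) = n} \<subseteq> {x\<in>A. w x \<le> n} \<times> {y\<in>B. v y \<le> n}" by auto
  then show "finite {p\<in>A \<times> B. w (fst p) + v (snd p) = n}"
    using ffib_le[OF assms(1)] ffib_le[OF assms(2)] finite_subset by blast
qed

lemma wf_mult:
  assumes fa: "ffib A w" and fb: "ffib B v"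
  shows "wf A w c * wf B v d = wf (A \<times> B) (\<lambda>p. w (fst p) + v (snd p)) (\<lambda>p. c (fst p) * d (snd p))"
proof (rule fps_ext)
  fix n
  define S where "S i = {x\<in>A. w x = i} \<times> {y\<in>B. v y = n - i}" for i
  have fS: "finite (S i)" for i using fa fb unfolding ffib_def S_def by auto
  have "(wf A w c * wf B v d) $ n = (\<Sum>i=0..n. (\<Sum>x\<in>{x\<in>A. w x = i}. c x) * (\<Sum>y\<in>{y\<in>B. v y = n - i}. d y))"
    by (simp add: fps_mult_nth wf_nth)
  also have "\<dots> = (\<Sum>i=0..n. \<Sum>p\<in>S i. c (fst p) * d (snd p))"
    unfolding S_def sum_product sum.cartesian_product by (simp add: case_prod_beta)
  also have "\<dots> = (\<Sum>p\<in>(\<Union>i\<in>{0..n}. S i). c (fst p) * d (snd p))"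
    by (rule sum.UNION_disjoint[symmetric]) (auto simp: fS[unfolded S_def] S_def)
  also have "(\<Union>i\<in>{0..n}. S i) = {p\<in>A \<times> B. w (fst p) + v (snd p) = n}"
    unfolding S_def by force
  finally show "(wf A w c * wf B v d) $ n = wf (A \<times> B) (\<lambda>p. w (fst p) + v (snd p)) (\<lambda>p. c (fst p) * d (snd p)) $ n"
    by (simp add: wf_nth)
qed

lemma bij_betw_restrict_pred:
  assumes "bij_betw h B A"
  shows "bij_betw h {y\<in>B. P (h y)} {x\<in>A. P x}"
  using assms unfolding bij_betw_def inj_on_def by (auto simp: image_iff)

lemma wf_reindex:
  assumes "bij_betw h B A"
  shows "wf A w c = wf B (\<lambda>y. w (h y)) (\<lambda>y. c (h y))"
proof (rule fps_ext)
  fix n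
  have "(\<Sum>y\<in>{y\<in>B. w (h y) = n}. c (h y)) = (\<Sum>x\<in>{x\<in>A. w x = n}. c x)"
    by (rule sum.reindex_bij_betw[OF bij_betw_restrict_pred[OF assms]])
  then show "wf A w c $ n = wf B (\<lambda>y. w (h y)) (\<lambda>y. c (h y)) $ n"
    by (simp add: wf_nth)
qed

lemma wf_cong:
  assumes "\<And>x. x\<in>A \<Longrightarrow> w x = w' x" "\<And>x. x\<in>A \<Longrightarrow> c x = c' x"
  shows "wf A w c = wf A w' c'"
proof (rule fps_ext)
  fix n
  have "{x\<in>A. w x = n} = {x\<in>A. w' x = n}" using assms by auto
  then show "wf A w c $ n = wf A w' c' $ n"
    unfolding wf_nth using assms by (auto intro!: sum.cong)
qed

lemma wf_split:
  assumes "ffib A w"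
  shows "wf A w c = wf (A \<inter> S) w c + wf (A - S) w c"
proof (rule fps_ext)
  fix n
  have f: "finite {x\<in>A. w x = n}" using assms unfolding ffib_def by auto
  have "(\<Sum>x\<in>{x\<in>A. w x = n}. c x) = (\<Sum>x\<in>{x\<in>A. w x = n} \<inter> S. c x) + (\<Sum>x\<in>{x\<in>A. w x = n} - S. c x)"
    by (rule sum.Int_Diff[OF f])
  moreover have "{x\<in>A. w x = n} \<inter> S = {x\<in>A \<inter> S. w x = n}" "{x\<in>A. w x = n} - S = {x\<in>A - S. w x = n}" by auto
  ultimately show "wf A w c $ n = (wf (A \<inter> S) w c + wf (A - S) w c) $ n"
    by (simp add: wf_nth)
qed

lemma wf_X: "fps_X * wf A w c = wf A (\<lambda>x. w x + 1) c"
proof (rule fps_ext)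
  fix n
  show "(fps_X * wf A w c) $ n = wf A (\<lambda>x. w x + 1) c $ n"
    by (cases n) (simp_all add: wf_nth fps_X_mult_nth)
qed

lemma wf_neg: "wf A w (\<lambda>x. - c x) = - wf A w c"
  by (rule fps_ext) (simp add: wf_nth sum_negf)

definition dil3 :: "complex fps \<Rightarrow> complex fps" where
  "dil3 F = Abs_fps (\<lambda>n. if 3 dvd n then F $ (n div 3) else 0)"

lemma dil3_nth: "dil3 F $ n = (if 3 dvd n then F $ (n div 3) else 0)"
  unfolding dil3_def by simp

lemma wf_dil3: "wf A (\<lambda>x. 3 * w x) c = dil3 (wf A w c)"
proof (rule fps_ext)
  fix n
  show "wf A (\<lambda>x. 3 * w x) c $ n = dil3 (wf A w c) $ n"
  proof (cases "3 dvd n")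
    case True
    then have e: "{x\<in>A. 3 * w x = n} = {x\<in>A. w x = n div 3}" by auto
    show ?thesis unfolding wf_nth dil3_nth e using True by simp
  next
    case False
    then have e: "{x\<in>A. 3 * w x = n} = {}" by auto
    show ?thesis unfolding wf_nth dil3_nth e using False by simp
  qed
qed

lemma wf_id: "wf UNIV (\<lambda>n. n) (\<lambda>n. F $ n) = F"
  by (rule fps_ext) (simp add: wf_nth)

lemma ffib_id: "ffib UNIV (\<lambda>n::nat. n)" unfolding ffib_def by simp

lemma ffib3: "ffib UNIV (\<lambda>n::nat. 3 * n)"
  unfolding ffib_def
proof
  fix n :: nat
  show "finite {x \<in> UNIV. 3 * x = n}" by (rule finite_subset[of _ "{..n}"]) auto
qed

lemma dil3_mult: "dil3 F * dil3 G = dil3 (F * G)"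
proof -
  have "dil3 F * dil3 G = wf UNIV (\<lambda>n. 3 * n) (\<lambda>n. F $ n) * wf UNIV (\<lambda>n. 3 * n) (\<lambda>n. G $ n)"
    using wf_dil3[of UNIV "\<lambda>n. n" "\<lambda>n. F $ n"] wf_dil3[of UNIV "\<lambda>n. n" "\<lambda>n. G $ n"] wf_id by simp
  also have "\<dots> = wf (UNIV \<times> UNIV) (\<lambda>p. 3 * fst p + 3 * snd p) (\<lambda>p. F $ fst p * G $ snd p)"
    by (rule wf_mult[OF ffib3 ffib3])
  also have "\<dots> = wf (UNIV \<times> UNIV) (\<lambda>p. 3 * (fst p + snd p)) (\<lambda>p. F $ fst p * G $ snd p)"
    by (rule wf_cong) auto
  also have "\<dots> = dil3 (wf (UNIV \<times> UNIV) (\<lambda>p. fst p + snd p) (\<lambda>p. F $ fst p * G $ snd p))"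
    by (rule wf_dil3)
  also have "wf (UNIV \<times> UNIV) (\<lambda>p. fst p + snd p) (\<lambda>p. F $ fst p * G $ snd p) = F * G"
    using wf_mult[OF ffib_id ffib_id, of "\<lambda>n. F $ n" "\<lambda>n. G $ n"] wf_id by simp
  finally show ?thesis .
qed

lemma dil3_1: "dil3 1 = 1"
  by (rule fps_ext) (auto simp: dil3_nth)

lemma wf_inv_zero:
  assumes fa: "ffib A w" and sA: "\<And>x. x \<in> A \<Longrightarrow> \<sigma> x \<in> A" and ss: "\<And>x. x \<in> A \<Longrightarrow> \<sigma> (\<sigma> x) = x"
    and sw: "\<And>x. x \<in> A \<Longrightarrow> w (\<sigma> x) = w x" and sc: "\<And>x. x \<in> A \<Longrightarrow> c (\<sigma> x) = - c x"
  shows "wf A w c = 0"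
proof (rule fps_ext)
  fix n
  define F where "F = {x\<in>A. w x = n}"
  have b: "bij_betw \<sigma> F F"
    unfolding F_def by (rule bij_betw_byWitness[where f'=\<sigma>]) (auto simp: sA ss sw)
  have "(\<Sum>x\<in>F. c x) = (\<Sum>x\<in>F. c (\<sigma> x))"
    by (rule sum.reindex_bij_betw[OF b, symmetric])
  also have "\<dots> = - (\<Sum>x\<in>F. c x)"
    by (simp add: sum_negf F_def sc)
  finally have "(\<Sum>x\<in>F. c x) = 0" by simp
  then show "wf A w c $ n = 0 $ n" by (simp add: wf_nth F_def)
qed

definition Pf :: "complex fps" where "Pf = wf UNIV pe sg"
definition Qa :: "int \<times> int \<Rightarrow> nat" where "Qa p = nat ((fst p)^2 + fst p * snd p + (snd p)^2)"
definition Qc :: "int \<times> int \<Rightarrow> nat" where "Qc p = nat ((fst p)^2 + fst p * snd p + (snd p)^2 + fst p + snd p)"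
definition Aq :: "complex fps" where "Aq = wf UNIV Qa (\<lambda>_. 1)"
definition Cq :: "complex fps" where "Cq = wf UNIV Qc (\<lambda>_. 1)"

lemma abs_le_sq: "\<bar>x::int\<bar> \<le> x^2"
proof (cases "x = 0")
  case False
  then have "\<bar>x\<bar> * 1 \<le> \<bar>x\<bar> * \<bar>x\<bar>" by (intro mult_left_mono) auto
  then show ?thesis by (simp add: power2_eq_square abs_mult_self_eq)
qed simp

lemma Qa_int: "int (Qa (u,v)) = u^2 + u * v + v^2"
proof -
  have h: "2*(u^2 + u * v + v^2) = (u+v)^2 + u^2 + v^2" by (simp add: power2_eq_square algebra_simps)
  have "0 \<le> 2*(u^2 + u * v + v^2)" by (subst h) simp
  then have "0 \<le> u^2 + u * v + v^2" by simp
  then show ?thesis unfolding Qa_def by simp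
qed

lemma Qc_int: "int (Qc (u,v)) = u^2 + u * v + v^2 + u + v"
proof -
  have h: "2*(u^2 + u * v + v^2 + u + v) + 1 = (u+v+1)^2 + u^2 + v^2" by (simp add: power2_eq_square algebra_simps)
  have "0 \<le> 2*(u^2 + u * v + v^2 + u + v) + 1" by (subst h) simp
  then have "0 \<le> u^2 + u * v + v^2 + u + v" by presburger
  then show ?thesis unfolding Qc_def by simp
qed

lemma pe_ge: "\<bar>j\<bar> \<le> int (pe j)"
proof -
  have "2 * \<bar>j\<bar> \<le> j*(3*j+1)"
  proof (cases "j \<ge> 0")
    case True
    then show ?thesis
    proof (cases "j = 0")
      case False
      with True have "0 \<le> j * (3*j - 1)" by (intro mult_nonneg_nonneg) auto
      then show ?thesis using True by (simp add: algebra_simps)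
    qed simp
  next
    case False
    then have "0 \<le> (-j) * (-j - 1)" by (intro mult_nonneg_nonneg) auto
    then have "0 \<le> 3 * ((-j) * (-j - 1))" by simp
    then show ?thesis using False by (simp add: algebra_simps)
  qed
  then show ?thesis using pe_2[of j] by linarith
qed

lemma ffib_pe: "ffib UNIV pe"
  unfolding ffib_def
proof
  fix n
  show "finite {x \<in> UNIV. pe x = n}"
  proof (rule finite_subset[of _ "{-int n..int n}"])
    show "{x \<in> UNIV. pe x = n} \<subseteq> {-int n..int n}"
    proof
      fix x assume "x \<in> {x \<in> UNIV. pe x = n}"
      then have "\<bar>x\<bar> \<le> int n" using pe_ge[of x] by simp
      then show "x \<in> {-int n..int n}" by auto
    qed
  qed simp
qed

lemma ffib_Qa: "ffib UNIV Qa"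
  unfolding ffib_def
proof
  fix n
  have "{x \<in> UNIV. Qa x = n} \<subseteq> {-2*int n..2*int n} \<times> {-2*int n..2*int n}"
  proof -
    have "(u,v) \<in> {-2*int n..2*int n} \<times> {-2*int n..2*int n}" if "Qa (u,v) = n" for u v
    proof -
    from that have e: "u^2 + u * v + v^2 = int n" using Qa_int by metis
    have "2*(u^2 + u * v + v^2) = (u+v)^2 + u^2 + v^2" by (simp add: power2_eq_square algebra_simps)
    then have "u^2 \<le> 2*int n" "v^2 \<le> 2 * int n" using e by (smt (verit) zero_le_power2)+
    then show "(u,v) \<in> {-2*int n..2*int n} \<times> {-2*int n..2*int n}"
      using abs_le_sq[of u] abs_le_sq[of v] by auto
    qed
    then show ?thesis by auto
  qed
  then show "finite {x \<in> UNIV. Qa x = n}" by (rule finite_subset) auto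
qed

lemma ffib_Qc: "ffib UNIV Qc"
  unfolding ffib_def
proof
  fix n
  have "{x \<in> UNIV. Qc x = n} \<subseteq> {-2*int n-1..2*int n+1} \<times> {-2*int n-1..2*int n+1}"
  proof -
    have "(u,v) \<in> {-2*int n-1..2*int n+1} \<times> {-2*int n-1..2*int n+1}" if "Qc (u,v) = n" for u v
    proof -
    from that have e: "u^2 + u * v + v^2 + u + v = int n" using Qc_int by metis
    have "2*(u^2 + u * v + v^2 + u + v) + 1 = (u+v+1)^2 + u^2 + v^2" by (simp add: power2_eq_square algebra_simps)
    then have "u^2 \<le> 2*int n + 1" "v^2 \<le> 2 * int n + 1" using e by (smt (verit) zero_le_power2)+
    then show "(u,v) \<in> {-2*int n-1..2*int n+1} \<times> {-2*int n-1..2*int n+1}"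
      using abs_le_sq[of u] abs_le_sq[of v] by auto
    qed
    then show ?thesis by auto
  qed
  then show "finite {x \<in> UNIV. Qc x = n}" by (rule finite_subset) auto
qed

lemma ffib_subset: "ffib A w \<Longrightarrow> B \<subseteq> A \<Longrightarrow> ffib B w"
  unfolding ffib_def by (auto intro: finite_subset[rotated])

lemma ffib_bij:
  assumes "bij_betw h B A" "ffib A w"
  shows "ffib B (\<lambda>y. w (h y))"
  unfolding ffib_def
proof
  fix n
  have b: "bij_betw h {y\<in>B. w (h y) = n} {x\<in>A. w x = n}"
    by (rule bij_betw_restrict_pred[OF assms(1)])
  show "finite {y\<in>B. w (h y) = n}"
    using bij_betw_finite[OF b] assms(2) unfolding ffib_def by auto
qed

definition W3 :: "int \<times> int \<times> int \<Rightarrow> nat" where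
  "W3 p = pe (fst p) + (pe (fst (snd p)) + pe (snd (snd p)))"
definition C3 :: "int \<times> int \<times> int \<Rightarrow> complex" where
  "C3 p = sg (fst p) * (sg (fst (snd p)) * sg (snd (snd p)))"
definition tot :: "int \<times> int \<times> int \<Rightarrow> int" where
  "tot p = fst p + fst (snd p) + snd (snd p)"

lemma ffib_W3: "ffib UNIV W3"
proof -
  have "ffib (UNIV \<times> (UNIV \<times> UNIV)) (\<lambda>p. pe (fst p) + (pe (fst (snd p)) + pe (snd (snd p))))"
    using ffib_prod[OF ffib_pe ffib_prod[OF ffib_pe ffib_pe]] by simp
  then show ?thesis unfolding W3_def by simp
qed

lemma Pf_cube: "Pf ^ 3 = wf UNIV W3 C3"
proof -
  have "Pf * Pf = wf (UNIV \<times> UNIV) (\<lambda>p. pe (fst p) + pe (snd p)) (\<lambda>p. sg (fst p) * sg (snd p))"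
    unfolding Pf_def by (rule wf_mult[OF ffib_pe ffib_pe])
  then have "Pf * (Pf * Pf) = wf (UNIV \<times> (UNIV \<times> UNIV)) (\<lambda>p. pe (fst p) + (pe (fst (snd p)) + pe (snd (snd p))))
       (\<lambda>p. sg (fst p) * (sg (fst (snd p)) * sg (snd (snd p))))"
    using wf_mult[OF ffib_pe ffib_prod[OF ffib_pe ffib_pe]] unfolding Pf_def by simp
  then show ?thesis unfolding W3_def C3_def by (simp add: power3_eq_cube mult.assoc)
qed

lemma sg_3: "(sg (3 * s) :: 'a::comm_ring_1) = sg s"
  unfolding sg_def by simp

lemma sg_m1: "(sg (s - 1) :: 'a::comm_ring_1) = - sg s"
  unfolding sg_def by auto

lemma ffib_3: "ffib A w \<Longrightarrow> ffib A (\<lambda>x. 3 * w x)"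
  unfolding ffib_def
proof
  fix n assume a: "\<forall>n. finite {x \<in> A. w x = n}"
  have "{x \<in> A. 3 * w x = n} \<subseteq> {x \<in> A. w x = n div 3}" by auto
  then show "finite {x \<in> A. 3 * w x = n}"
    using a finite_subset by blast
qed

definition h0 :: "int \<times> int \<times> int \<Rightarrow> int \<times> int \<times> int" where
  "h0 p = (fst p + fst (snd p), fst p + snd (snd p), fst p - fst (snd p) - snd (snd p))"
definition h1 :: "int \<times> int \<times> int \<Rightarrow> int \<times> int \<times> int" where
  "h1 p = (fst p + fst (snd p), fst p + snd (snd p), fst p + 1 - fst (snd p) - snd (snd p))"
definition h2 :: "int \<times> int \<times> int \<Rightarrow> int \<times> int \<times> int" where
  "h2 p = (fst (snd p) - fst p, snd (snd p) - fst p, - fst p - 1 - fst (snd p) - snd (snd p))"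

lemma bij_h0: "bij_betw h0 UNIV {x. tot x mod 3 = 0}"
proof (rule bij_betw_byWitness[where f' = "\<lambda>x. (tot x div 3, fst x - tot x div 3, fst (snd x) - tot x div 3)"])
  show "\<forall>a\<in>UNIV. (tot (h0 a) div 3, fst (h0 a) - tot (h0 a) div 3, fst (snd (h0 a)) - tot (h0 a) div 3) = a"
    by (auto simp: h0_def tot_def)
  show "\<forall>a'\<in>{x. tot x mod 3 = 0}. h0 (tot a' div 3, fst a' - tot a' div 3, fst (snd a') - tot a' div 3) = a'"
  proof
    fix y :: "int \<times> int \<times> int" assume "y \<in> {x. tot x mod 3 = 0}"
    then obtain k where k: "tot y = 3 * k" by auto
    then show "h0 (tot y div 3, fst y - tot y div 3, fst (snd y) - tot y div 3) = y"
      by (cases y) (auto simp: h0_def tot_def)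
  qed
  show "h0 ` UNIV \<subseteq> {x. tot x mod 3 = 0}" by (auto simp: h0_def tot_def)
qed simp

lemma bij_h1: "bij_betw h1 UNIV {x. tot x mod 3 = 1}"
proof (rule bij_betw_byWitness[where f' = "\<lambda>x. (tot x div 3, fst x - tot x div 3, fst (snd x) - tot x div 3)"])
  show "\<forall>a\<in>UNIV. (tot (h1 a) div 3, fst (h1 a) - tot (h1 a) div 3, fst (snd (h1 a)) - tot (h1 a) div 3) = a"
    by (auto simp: h1_def tot_def)
  show "\<forall>a'\<in>{x. tot x mod 3 = 1}. h1 (tot a' div 3, fst a' - tot a' div 3, fst (snd a') - tot a' div 3) = a'"
  proof
    fix y :: "int \<times> int \<times> int" assume "y \<in> {x. tot x mod 3 = 1}"
    then have m: "tot y mod 3 = 1" by simp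
    have "tot y = 3 * (tot y div 3) + 1" using div_mult_mod_eq[of "tot y" 3] m by linarith
    then show "h1 (tot y div 3, fst y - tot y div 3, fst (snd y) - tot y div 3) = y"
      by (cases y) (auto simp: h1_def tot_def)
  qed
  show "h1 ` UNIV \<subseteq> {x. tot x mod 3 = 1}" by (auto simp: h1_def tot_def)
qed simp

lemma bij_h2: "bij_betw h2 UNIV {x. tot x mod 3 = 2}"
proof (rule bij_betw_byWitness[where f' = "\<lambda>x. (- (tot x div 3) - 1, fst x - (tot x div 3) - 1, fst (snd x) - (tot x div 3) - 1)"])
  show "\<forall>a\<in>UNIV. (- (tot (h2 a) div 3) - 1, fst (h2 a) - (tot (h2 a) div 3) - 1, fst (snd (h2 a)) - (tot (h2 a) div 3) - 1) = a"
  proof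
    fix a :: "int \<times> int \<times> int"
    have "tot (h2 a) = 3 * (- fst a - 1) + 2" by (simp add: h2_def tot_def)
    then have "tot (h2 a) div 3 = - fst a - 1" by presburger
    then show "(- (tot (h2 a) div 3) - 1, fst (h2 a) - (tot (h2 a) div 3) - 1, fst (snd (h2 a)) - (tot (h2 a) div 3) - 1) = a"
      by (cases a) (simp add: h2_def)
  qed
  show "\<forall>a'\<in>{x. tot x mod 3 = 2}. h2 (- (tot a' div 3) - 1, fst a' - (tot a' div 3) - 1, fst (snd a') - (tot a' div 3) - 1) = a'"
  proof
    fix y :: "int \<times> int \<times> int" assume "y \<in> {x. tot x mod 3 = 2}"
    then have m: "tot y mod 3 = 2" by simp
    have "tot y = 3 * (tot y div 3) + 2" using div_mult_mod_eq[of "tot y" 3] m by linarith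
    then show "h2 (- (tot y div 3) - 1, fst y - (tot y div 3) - 1, fst (snd y) - (tot y div 3) - 1) = y"
      by (cases y) (auto simp: h2_def tot_def)
  qed
  have "tot (h2 a) mod 3 = 2" for a
  proof -
    have "tot (h2 a) = 3 * (- fst a - 1) + 2" by (simp add: h2_def tot_def)
    then show ?thesis by presburger
  qed
  then show "h2 ` UNIV \<subseteq> {x. tot x mod 3 = 2}" by auto
qed simp

lemma W3_h0: "W3 (h0 (s,u,v)) = 3 * pe s + 3 * Qa (u,v)"
proof (rule two_int_inj)
  show "2 * int (W3 (h0 (s,u,v))) = 2 * int (3 * pe s + 3 * Qa (u,v))"
    unfolding W3_def h0_def using pe_2[of "s+u"] pe_2[of "s+v"] pe_2[of "s-u-v"] pe_2[of s] Qa_int[of u v]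
    by (simp add: algebra_simps power2_eq_square)
qed

lemma W3_h1: "2 * int (W3 (h1 (s,u,v))) = 9 * s * s + 9 * s + 4 + 6 * (u * u + u * v + v * v - u - v)"
  unfolding W3_def h1_def using pe_2[of "s+u"] pe_2[of "s+v"] pe_2[of "s+1-u-v"]
  by (simp add: algebra_simps power2_eq_square)

lemma W3_h2: "W3 (h2 (s,u,v)) = 3 * pe s + 3 * Qc (u,v) + 1"
proof (rule two_int_inj)
  show "2 * int (W3 (h2 (s,u,v))) = 2 * int (3 * pe s + 3 * Qc (u,v) + 1)"
    unfolding W3_def h2_def using pe_2[of "u-s"] pe_2[of "v-s"] pe_2[of "-s-1-u-v"] pe_2[of s] Qc_int[of u v]
    by (simp add: algebra_simps power2_eq_square)
qed

lemma C3_h0: "C3 (h0 (s,u,v)) = sg s"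
proof -
  have "C3 (h0 (s,u,v)) = sg ((s+u) + ((s+v) + (s-u-v)))" unfolding C3_def h0_def by (simp only: fst_conv snd_conv sg_add)
  also have "(s+u) + ((s+v) + (s-u-v)) = 3 * s" by simp
  finally show ?thesis by (simp add: sg_3)
qed

lemma C3_h1: "C3 (h1 (s,u,v)) = - sg s"
proof -
  have "C3 (h1 (s,u,v)) = sg ((s+u) + ((s+v) + (s+1-u-v)))" unfolding C3_def h1_def by (simp only: fst_conv snd_conv sg_add)
  also have "(s+u) + ((s+v) + (s+1-u-v)) = 3 * (s+1) - 1 - 1" by simp
  finally show ?thesis by (simp only: sg_m1 sg_3 sg_add) (simp add: sg_def)
qed

lemma C3_h2: "C3 (h2 (s,u,v)) = - sg s"
proof -
  have "C3 (h2 (s,u,v)) = sg ((u-s) + ((v-s) + (-s-1-u-v)))" unfolding C3_def h2_def by (simp only: fst_conv snd_conv sg_add)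
  also have "(u-s) + ((v-s) + (-s-1-u-v)) = 3 * (-s) - 1" by simp
  finally show ?thesis by (simp only: sg_m1 sg_3 sg_uminus)
qed

lemma prod_mult_3:
  "wf UNIV (\<lambda>y::int\<times>int\<times>int. 3 * pe (fst y) + 3 * Q (snd y)) (\<lambda>y. sg (fst y) * 1) = dil3 Pf * dil3 (wf UNIV Q (\<lambda>_. 1))"
  if "ffib UNIV Q" for Q :: "int \<times> int \<Rightarrow> nat"
proof -
  have "dil3 Pf * dil3 (wf UNIV Q (\<lambda>_. 1)) = wf UNIV (\<lambda>j. 3 * pe j) sg * wf UNIV (\<lambda>p. 3 * Q p) (\<lambda>_. 1)"
    unfolding Pf_def wf_dil3 ..
  also have "\<dots> = wf (UNIV \<times> UNIV) (\<lambda>y. 3 * pe (fst y) + 3 * Q (snd y)) (\<lambda>y. sg (fst y) * 1)"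
    by (rule wf_mult[OF ffib_3[OF ffib_pe] ffib_3[OF that]])
  finally show ?thesis by simp
qed

lemma dissect: "Pf ^ 3 = dil3 Pf * dil3 Aq - fps_X * (dil3 Pf * dil3 Cq)"
proof -
  define S0 where "S0 = {x. tot x mod 3 = 0}"
  define S1 where "S1 = {x. tot x mod 3 = 1}"
  define S2 where "S2 = {x. tot x mod 3 = 2}"
  have e1: "UNIV \<inter> S0 = S0" "(UNIV - S0) \<inter> S1 = S1" "(UNIV - S0) - S1 = S2"
    unfolding S0_def S1_def S2_def by auto
  have split: "wf UNIV W3 C3 = wf S0 W3 C3 + (wf S1 W3 C3 + wf S2 W3 C3)"
    using wf_split[OF ffib_W3, of C3 S0] wf_split[OF ffib_subset[OF ffib_W3], of "UNIV - S0" C3 S1]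
    unfolding e1 by simp
  have p0: "wf S0 W3 C3 = dil3 Pf * dil3 Aq"
  proof -
    have "wf S0 W3 C3 = wf UNIV (\<lambda>y. W3 (h0 y)) (\<lambda>y. C3 (h0 y))"
      unfolding S0_def by (rule wf_reindex[OF bij_h0])
    also have "\<dots> = wf UNIV (\<lambda>y. 3 * pe (fst y) + 3 * Qa (snd y)) (\<lambda>y. sg (fst y) * 1)"
      by (rule wf_cong) (auto simp: W3_h0 C3_h0)
    also have "\<dots> = dil3 Pf * dil3 Aq"
      unfolding Aq_def by (rule prod_mult_3[OF ffib_Qa])
    finally show ?thesis .
  qed
  have p1: "wf S1 W3 C3 = 0"
  proof -
    have "wf S1 W3 C3 = wf UNIV (\<lambda>y. W3 (h1 y)) (\<lambda>y. C3 (h1 y))"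
      unfolding S1_def by (rule wf_reindex[OF bij_h1])
    also have "\<dots> = 0"
    proof (rule wf_inv_zero[where \<sigma> = "\<lambda>y. (-1 - fst y, snd y)"])
      show "ffib UNIV (\<lambda>y. W3 (h1 y))"
        by (rule ffib_bij[OF bij_h1 ffib_subset[OF ffib_W3]]) simp
      fix x :: "int \<times> int \<times> int"
      obtain s u v where x: "x = (s,u,v)" by (cases x) auto
      show "W3 (h1 (-1 - fst x, snd x)) = W3 (h1 x)"
      proof (rule two_int_inj)
        show "2 * int (W3 (h1 (-1 - fst x, snd x))) = 2 * int (W3 (h1 x))"
          unfolding x by (simp add: W3_h1 algebra_simps)
      qed
      have "sg (-1 - s) = (- sg s :: complex)"
      proof -
        have "-1 - s = -s - 1" by simp
        then show ?thesis using sg_m1[of "-s", where 'a=complex] by (simp only: sg_uminus)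
      qed
      then show "C3 (h1 (-1 - fst x, snd x)) = - C3 (h1 x)"
        unfolding x by (simp add: C3_h1)
    qed auto
    finally show ?thesis .
  qed
  have p2: "wf S2 W3 C3 = - (fps_X * (dil3 Pf * dil3 Cq))"
  proof -
    have "wf S2 W3 C3 = wf UNIV (\<lambda>y. W3 (h2 y)) (\<lambda>y. C3 (h2 y))"
      unfolding S2_def by (rule wf_reindex[OF bij_h2])
    also have "\<dots> = wf UNIV (\<lambda>y. (3 * pe (fst y) + 3 * Qc (snd y)) + 1) (\<lambda>y. - (sg (fst y) * 1))"
      by (rule wf_cong) (auto simp: W3_h2 C3_h2)
    also have "\<dots> = - (fps_X * wf UNIV (\<lambda>y. 3 * pe (fst y) + 3 * Qc (snd y)) (\<lambda>y. sg (fst y) * 1))"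
      unfolding wf_neg wf_X ..
    also have "\<dots> = - (fps_X * (dil3 Pf * dil3 Cq))"
      unfolding Cq_def prod_mult_3[OF ffib_Qc] ..
    finally show ?thesis .
  qed
  show ?thesis unfolding Pf_cube split p0 p1 p2 by simp
qed

definition Pim :: "nat \<Rightarrow> complex fps" where "Pim m = (\<Prod>i\<in>{1..m}. 1 - fps_X ^ i)"

lemma T_ge1: "k \<ge> 1 \<Longrightarrow> T k \<ge> 1"
  using T_2[of k] by (cases k) auto

lemma sg_X_nth: "((sg j :: complex fps) * fps_X ^ e) $ i = (if i = e then sg j else 0)"
  by (simp add: sg_def)

lemma Pf_nth: "Pf $ i = (\<Sum>j\<in>{j. pe j = i}. sg j)"
  unfolding Pf_def wf_nth by simp

lemma Pim_trunc:
  assumes "i \<le> m"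
  shows "Pim m $ i = Pf $ i"
proof -
  define X :: "complex fps" where "X = fps_X"
  define t where "t k = (-1)^k * X^(m*k + T k) * (\<Prod>i\<in>{k+1..m}. 1 - X^i)" for k
  have z: "t k $ i = 0" if "k \<in> {..m}" "k \<noteq> 0" for k
  proof -
    have "m * k \<ge> m" using that by simp
    moreover have "T k \<ge> 1" using that T_ge1 by simp
    ultimately have lt: "i < m*k + T k" using assms by linarith
    have "t k = X^(m*k + T k) * ((-1)^k * (\<Prod>i\<in>{k+1..m}. 1 - X^i))"
      unfolding t_def by (simp add: algebra_simps)
    then show ?thesis using lt unfolding X_def by (simp add: fps_X_power_mult_nth)
  qed
  have "shS m X $ i = (\<Sum>k\<le>m. t k $ i)"
    unfolding shS_def t_def fps_sum_nth ..
  also have "\<dots> = t 0 $ i"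
  proof -
    have "(\<Sum>k\<le>m. t k $ i) = t 0 $ i + (\<Sum>k\<in>{..m} - {0}. t k $ i)"
      by (rule sum.remove) auto
    also have "(\<Sum>k\<in>{..m} - {0}. t k $ i) = 0"
      by (rule sum.neutral) (use z in auto)
    finally show ?thesis by simp
  qed
  also have "t 0 = Pim m" unfolding t_def Pim_def X_def by (simp add: T_def)
  finally have L: "shS m X $ i = Pim m $ i" .
  have "shP m X $ i = (\<Sum>j\<in>{-int m..int m}. if i = pe j then sg j else 0)"
    unfolding shP_def fps_sum_nth X_def sg_X_nth ..
  also have "\<dots> = (\<Sum>j\<in>{j\<in>{-int m..int m}. i = pe j}. sg j)"
    by (rule sum.inter_filter[symmetric]) simp
  also have "{j\<in>{-int m..int m}. i = pe j} = {j. pe j = i}"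
  proof (intro set_eqI iffI)
    fix j assume "j \<in> {j. pe j = i}"
    then have "\<bar>j\<bar> \<le> int m" using pe_ge[of j] assms by simp
    then show "j \<in> {j\<in>{-int m..int m}. i = pe j}" using \<open>j \<in> {j. pe j = i}\<close> by auto
  qed auto
  finally have R: "shP m X $ i = Pf $ i" unfolding Pf_nth .
  show ?thesis using L R shanks[of m X] by simp
qed

definition geo :: "nat \<Rightarrow> complex fps" where "geo k = Abs_fps (\<lambda>n. if k dvd n then 1 else 0)"

lemma geo_inv: assumes "k \<ge> 1" shows "(1 - fps_X ^ k) * geo k = 1"
proof (rule fps_ext)
  fix n
  have "((1 - fps_X ^ k) * geo k) $ n = geo k $ n - (fps_X ^ k * geo k) $ n"
    by (simp add: algebra_simps)
  also have "\<dots> = (if n = 0 then 1 else 0)"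
  proof (cases "n < k")
    case True
    have d: "k dvd n \<longleftrightarrow> n = 0" using True assms by (auto dest: dvd_imp_le)
    have "(fps_X ^ k * geo k) $ n = 0" using True by (simp add: fps_X_power_mult_nth)
    then show ?thesis using d by (simp add: geo_def)
  next
    case False
    then have d: "k dvd (n - k) \<longleftrightarrow> k dvd n" by (simp add: dvd_minus_self)
    have "(fps_X ^ k * geo k) $ n = geo k $ (n - k)" using False by (simp add: fps_X_power_mult_nth)
    then show ?thesis using False assms d by (simp add: geo_def)
  qed
  finally show "((1 - fps_X ^ k) * geo k) $ n = 1 $ n" by simp
qed

definition Jm :: "nat \<Rightarrow> complex fps" where "Jm m = (\<Prod>i\<in>{1..m}. geo i)"

lemma Pim_Jm: "Pim m * Jm m = 1"
proof -
  have "Pim m * Jm m = (\<Prod>i\<in>{1..m}. (1 - fps_X ^ i) * geo i)"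
    unfolding Pim_def Jm_def by (rule prod.distrib[symmetric])
  also have "\<dots> = 1" by (rule prod.neutral) (auto intro: geo_inv)
  finally show ?thesis .
qed

lemma nat_conv:
  assumes "\<And>n. F $ n = of_nat (f n)" "\<And>n. H $ n = of_nat (h n)"
  shows "(F * H) $ n = of_nat (\<Sum>i=0..n. f i * h (n - i))"
  by (simp add: fps_mult_nth assms)

lemma Jm_pos: "m \<ge> 1 \<Longrightarrow> \<exists>f. (\<forall>n. Jm m $ n = of_nat (f n) \<and> f n \<ge> 1)"
proof (induction m rule: dec_induct)
  case base
  have "Jm 1 = geo 1" unfolding Jm_def by simp
  then show ?case by (intro exI[of _ "\<lambda>_. 1"]) (simp add: geo_def)
next
  case (step m)
  then obtain f where f: "\<And>n. Jm m $ n = of_nat (f n)" "\<And>n. f n \<ge> 1" by blast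
  define g where "g n = (if Suc m dvd n then 1 else 0 :: nat)" for n
  have gg: "geo (Suc m) $ n = of_nat (g n)" for n unfolding geo_def g_def by simp
  have J: "Jm (Suc m) = Jm m * geo (Suc m)" unfolding Jm_def by (simp add: prod.cl_ivl_Suc)
  show ?case
  proof (intro exI[of _ "\<lambda>n. \<Sum>i=0..n. f i * g (n - i)"] allI conjI)
    fix n
    show "Jm (Suc m) $ n = of_nat (\<Sum>i=0..n. f i * g (n - i))"
      unfolding J by (rule nat_conv[OF f(1) gg])
    have "f n * g (n - n) \<le> (\<Sum>i=0..n. f i * g (n - i))"
      by (rule member_le_sum[of n "{0..n}" "\<lambda>i. f i * g (n - i)"]) auto
    then show "1 \<le> (\<Sum>i=0..n. f i * g (n - i))" using f(2)[of n] by (simp add: g_def)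
  qed
qed

lemma pe_0_iff: "pe j = 0 \<longleftrightarrow> j = 0"
proof
  assume "pe j = 0" then show "j = 0" using pe_ge[of j] by simp
next
  assume "j = 0" then show "pe j = 0" by (simp add: pe_def)
qed

lemma Pf_0: "Pf $ 0 = 1"
proof -
  have "{j. pe j = 0} = {0}" by (auto simp: pe_0_iff)
  then show ?thesis unfolding Pf_nth by (simp add: sg_def)
qed

definition Ip :: "complex fps" where "Ip = inverse Pf"

lemma Pf_Ip: "Pf * Ip = 1"
  unfolding Ip_def by (rule inverse_mult_eq_1') (simp add: Pf_0)

lemma mult_trunc_zero:
  assumes "\<And>k. k \<le> m \<Longrightarrow> D $ k = 0" "i \<le> m"
  shows "(K * D) $ i = (0::complex)"
proof -
  have "\<forall>j\<in>{0..i}. K $ j * D $ (i - j) = 0" using assms by simp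
  then show ?thesis unfolding fps_mult_nth by (rule sum.neutral)
qed

lemma Ip_trunc:
  assumes "i \<le> m"
  shows "Ip $ i = Jm m $ i"
proof -
  have eq: "Ip - Jm m = (Ip * Jm m) * (Pim m - Pf)"
  proof -
    have "(Ip * Jm m) * (Pim m - Pf) = Ip * (Pim m * Jm m) - (Pf * Ip) * Jm m"
      by (simp only: algebra_simps)
    then show ?thesis by (simp only: Pim_Jm Pf_Ip mult_1_right mult_1_left)
  qed
  have "\<And>k. k \<le> m \<Longrightarrow> (Pim m - Pf) $ k = 0" by (simp add: Pim_trunc)
  then have "((Ip * Jm m) * (Pim m - Pf)) $ i = 0"
    by (rule mult_trunc_zero[OF _ assms])
  then have "(Ip - Jm m) $ i = 0" by (simp only: eq)
  then show ?thesis by simp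
qed

lemma wf_card: "wf UNIV Q (\<lambda>_. 1) $ n = of_nat (card {x. Q x = n})"
  unfolding wf_nth by simp

lemma pos_coeff:
  assumes fQ: "ffib UNIV Q" and Q0: "Q (0,0) = 0"
  shows "\<exists>N. N \<ge> 1 \<and> (wf UNIV Q (\<lambda>_. 1) * Ip) $ m = of_nat N"
proof -
  obtain f where f: "\<And>n. Jm (Suc m) $ n = of_nat (f n)" "\<And>n. f n \<ge> 1"
    using Jm_pos[of "Suc m"] by auto
  define c where "c n = card {x. Q x = n}" for n
  have "(wf UNIV Q (\<lambda>_. 1) * Ip) $ m = (\<Sum>i=0..m. wf UNIV Q (\<lambda>_. 1) $ i * Ip $ (m - i))"
    by (simp add: fps_mult_nth)
  also have "\<dots> = (\<Sum>i=0..m. of_nat (c i) * of_nat (f (m - i)))"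
    by (rule sum.cong) (auto simp: wf_card c_def Ip_trunc[of _ "Suc m"] f)
  also have "\<dots> = of_nat (\<Sum>i=0..m. c i * f (m - i))" by simp
  finally have e: "(wf UNIV Q (\<lambda>_. 1) * Ip) $ m = of_nat (\<Sum>i=0..m. c i * f (m - i))" .
  have "finite {x. Q x = 0}" using fQ unfolding ffib_def by simp
  moreover have "(0,0) \<in> {x. Q x = 0}" using Q0 by simp
  ultimately have "c 0 \<ge> 1" unfolding c_def
    by (metis One_nat_def Suc_leI card_gt_0_iff empty_iff)
  then have "1 \<le> c 0 * f (m - 0)" using f(2)[of m] by simp
  also have "c 0 * f (m - 0) \<le> (\<Sum>i=0..m. c i * f (m - i))"
    by (rule member_le_sum[of 0 "{0..m}" "\<lambda>i. c i * f (m - i)"]) auto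
  finally show ?thesis using e by blast
qed

lemma conv_ge1:
  assumes "\<And>n. norm (F $ n) \<le> 1"
  shows "fps_conv_radius F \<ge> 1"
proof -
  have "conv_radius (fps_nth F) \<ge> 1"
  proof (rule conv_radius_geI_ex')
    fix r :: real assume r: "0 < r" "ereal r < 1"
    then have r1: "r < 1" by simp
    show "summable (\<lambda>n. F $ n * of_real r ^ n)"
    proof (rule summable_norm_cancel, rule summable_comparison_test'[where g="\<lambda>n. r^n" and N=0])
      show "summable (\<lambda>n. r^n)" using r r1 by (simp add: summable_geometric)
      fix n :: nat
      have "norm (F $ n) * r^n \<le> 1 * r^n"
        by (rule mult_right_mono[OF assms]) (use r in simp)
      then show "norm (norm (F $ n * of_real r ^ n)) \<le> r^n"
        using r by (simp add: norm_mult norm_power)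
    qed
  qed
  then show ?thesis by (simp add: fps_conv_radius_def)
qed

lemma pe_inj: "pe a = pe b \<Longrightarrow> a = b"
proof -
  assume "pe a = pe b"
  then have "a*(3*a+1) = b*(3*b+1)" using pe_2[of a] pe_2[of b] by simp
  then have "(a - b) * (3*a + 3*b + 1) = 0" by (simp add: algebra_simps)
  moreover have "3*a + 3*b + 1 \<noteq> 0" by presburger
  ultimately show "a = b" by simp
qed

lemma norm_sg: "norm (sg j :: complex) = 1"
  unfolding sg_def by simp

lemma Pf_norm: "norm (Pf $ n) \<le> 1"
proof -
  define S where "S = {j. pe j = n}"
  have fS: "finite S" using ffib_pe unfolding ffib_def S_def by simp
  have "card S \<le> Suc 0" unfolding card_le_Suc0_iff_eq[OF fS] unfolding S_def using pe_inj by auto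
  have "norm (Pf $ n) = norm (\<Sum>j\<in>S. sg j :: complex)" unfolding Pf_nth S_def ..
  also have "\<dots> \<le> (\<Sum>j\<in>S. norm (sg j :: complex))" by (rule norm_sum)
  also have "\<dots> = real (card S)" by (simp add: norm_sg)
  also have "\<dots> \<le> 1" using \<open>card S \<le> Suc 0\<close> by simp
  finally show ?thesis .
qed

lemma dil3_norm: "(\<And>n. norm (F $ n) \<le> 1) \<Longrightarrow> norm (dil3 F $ n) \<le> 1"
  by (simp add: dil3_nth)

lemma eval_dil3:
  assumes F: "fps_conv_radius F \<ge> 1" and q: "norm q < 1"
  shows "eval_fps (dil3 F) q = eval_fps F (q^3)"
proof -
  have "norm (q^3) < 1" using q by (simp add: norm_power power_less_one_iff)
  then have "ereal (norm (q^3)) < fps_conv_radius F" using F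
    by (meson ereal_less(3) less_le_trans) 
  then have s: "(\<lambda>n. F $ n * (q^3)^n) sums eval_fps F (q^3)" by (rule sums_eval_fps)
  have "(\<lambda>n. (\<lambda>k. dil3 F $ k * q^k) (3 * n)) = (\<lambda>n. F $ n * (q^3)^n)"
    by (rule ext) (simp add: dil3_nth power_mult)
  with s have "(\<lambda>n. (\<lambda>k. dil3 F $ k * q^k) (3 * n)) sums eval_fps F (q^3)" by simp
  then have "(\<lambda>k. dil3 F $ k * q^k) sums eval_fps F (q^3)"
  proof (subst (asm) sums_mono_reindex)
    show "strict_mono (\<lambda>n::nat. 3 * n)" by (rule strict_monoI) simp
    fix n :: nat assume "n \<notin> range (\<lambda>n. 3 * n)"
    then have "\<not> 3 dvd n" by auto
    then show "dil3 F $ n * q ^ n = 0" by (simp add: dil3_nth)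
  qed
  then show ?thesis unfolding eval_fps_def by (rule sums_unique[symmetric])
qed

lemma n_pow_lim: assumes "0 \<le> r" "r < (1::real)" shows "(\<lambda>m. real m * r ^ m) \<longlonglongrightarrow> 0"
  using powser_times_n_limit_0[of r] assms by simp

lemma prod_bound:
  fixes q :: complex
  assumes q: "norm q < 1" and that: "finite A"
  shows "norm (\<Prod>i\<in>A. 1 - q^i) \<le> exp (1 / (1 - norm q))"
proof -
  define r where "r = norm q"
  have r: "0 \<le> r" "r < 1" using q by (auto simp: r_def)
  have "norm (\<Prod>i\<in>A. 1 - q^i) \<le> (\<Prod>i\<in>A. norm (1 - q^i))" by (rule norm_prod_le)
  also have "\<dots> \<le> (\<Prod>i\<in>A. exp (r^i))"
  proof (rule prod_mono)
    fix i assume "i \<in> A"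
    have "norm (1 - q^i) \<le> 1 + r^i" unfolding r_def
      using norm_triangle_ineq4[of 1 "q^i"] by (simp add: norm_power)
    also have "\<dots> \<le> exp (r^i)" by (rule exp_ge_add_one_self[THEN order.trans[rotated]]) simp
    finally show "0 \<le> norm (1 - q^i) \<and> norm (1 - q^i) \<le> exp (r^i)" by simp
  qed
  also have "\<dots> = exp (\<Sum>i\<in>A. r^i)" by (rule exp_sum[OF that, symmetric])
  also have "(\<Sum>i\<in>A. r^i) \<le> (\<Sum>i. r^i)"
    by (rule sum_le_suminf) (use r that in \<open>auto intro: summable_geometric\<close>)
  also have "(\<Sum>i. r^i) = 1 / (1 - r)" using r by (simp add: suminf_geometric)
  finally show ?thesis unfolding r_def by simp
qed

lemma partA:
  fixes q :: complex
  assumes q: "norm q < 1"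
  shows "(\<lambda>m. shS m q - (\<Prod>i\<in>{1..m}. 1 - q^i)) \<longlonglongrightarrow> 0"
proof -
  define r where "r = norm q"
  define B where "B = exp (1 / (1 - r))"
  have r: "0 \<le> r" "r < 1" using q by (auto simp: r_def)
  define t where "t m k = (-1)^k * q^(m*k + T k) * (\<Prod>i\<in>{k+1..m}. 1 - q^i)" for m k
  have split: "shS m q - (\<Prod>i\<in>{1..m}. 1 - q^i) = (\<Sum>k\<in>{..m} - {0}. t m k)" for m
  proof -
    have "shS m q = (\<Sum>k\<le>m. t m k)" unfolding shS_def t_def ..
    also have "\<dots> = t m 0 + (\<Sum>k\<in>{..m} - {0}. t m k)" by (rule sum.remove) auto
    also have "t m 0 = (\<Prod>i\<in>{1..m}. 1 - q^i)" unfolding t_def by (simp add: T_def)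
    finally show ?thesis by simp
  qed
  have bound: "norm (t m k) \<le> r^(m+1) * B" if "k \<in> {..m} - {0}" for m k
  proof -
    have k1: "k \<ge> 1" using that by auto
    have "m + 1 \<le> m*k + T k" using k1 T_ge1[OF k1] by (metis add_le_mono mult_le_cancel1 nat_mult_1_right)
    then have p: "r^(m*k + T k) \<le> r^(m+1)" by (rule power_decreasing) (use r in auto)
    have "norm (t m k) = r^(m*k + T k) * norm (\<Prod>i\<in>{k+1..m}. 1 - q^i)"
      unfolding t_def r_def by (simp add: norm_mult norm_power)
    also have "\<dots> \<le> r^(m+1) * B"
      unfolding B_def r_def
      by (rule mult_mono[OF p[unfolded r_def] prod_bound[OF q]]) auto
    finally show ?thesis .
  qed
  have nb: "norm (shS m q - (\<Prod>i\<in>{1..m}. 1 - q^i)) \<le> real m * r^m * (r * B)" for m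
  proof -
    have "norm (\<Sum>k\<in>{..m} - {0}. t m k) \<le> (\<Sum>k\<in>{..m} - {0}. norm (t m k))" by (rule norm_sum)
    also have "\<dots> \<le> (\<Sum>k\<in>{..m} - {0}. r^(m+1) * B)" by (rule sum_mono) (rule bound)
    also have "\<dots> = real m * (r^(m+1) * B)" by simp
    also have "\<dots> = real m * r^m * (r * B)" by (simp add: algebra_simps)
    finally show ?thesis unfolding split .
  qed
  have "(\<lambda>m. real m * r^m * (r * B)) \<longlonglongrightarrow> 0"
    by (rule tendsto_mult_left_zero[OF n_pow_lim[OF r]])
  then show ?thesis
    by (rule Lim_null_comparison[rotated]) (use nb in auto)
qed

lemma partB:
  fixes q :: complex
  assumes q: "norm q < 1"
  shows "(\<lambda>m. shP m q - (\<Sum>k\<le>m. Pf $ k * q^k)) \<longlonglongrightarrow> 0"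
proof -
  define r where "r = norm q"
  have r: "0 \<le> r" "r < 1" using q by (auto simp: r_def)
  have nb: "norm (shP m q - (\<Sum>k\<le>m. Pf $ k * q^k)) \<le> 2 * r * (real m * r^m) + r * r^m" for m
  proof -
    define L where "L = {j. pe j \<le> m}"
    define M where "M = {-int m..int m}"
    have LM: "L \<subseteq> M"
    proof
      fix j assume "j \<in> L"
      then have "\<bar>j\<bar> \<le> int m" using pe_ge[of j] unfolding L_def by simp
      then show "j \<in> M" unfolding M_def by (simp add: abs_le_iff)
    qed
    have fL: "finite L" using LM finite_subset unfolding M_def by blast
    have "(\<Sum>k\<le>m. Pf $ k * q^k) = (\<Sum>k\<le>m. \<Sum>j\<in>{j. pe j = k}. sg j * q^(pe j))"
      unfolding Pf_nth sum_distrib_right by (rule sum.cong) auto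
    also have "\<dots> = (\<Sum>j\<in>(\<Union>k\<in>{..m}. {j. pe j = k}). sg j * q^(pe j))"
      by (rule sum.UNION_disjoint[symmetric]) (use ffib_pe in \<open>auto simp: ffib_def\<close>)
    also have "(\<Union>k\<in>{..m}. {j. pe j = k}) = L" unfolding L_def by auto
    finally have e1: "(\<Sum>k\<le>m. Pf $ k * q^k) = (\<Sum>j\<in>L. sg j * q^(pe j))" .
    have "shP m q = (\<Sum>j\<in>M - L. sg j * q^(pe j)) + (\<Sum>j\<in>L. sg j * q^(pe j))"
      unfolding shP_def M_def[symmetric] by (rule sum.subset_diff[OF LM]) (simp add: M_def)
    then have "shP m q - (\<Sum>k\<le>m. Pf $ k * q^k) = (\<Sum>j\<in>M - L. sg j * q^(pe j))"
      using e1 by simp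
    also have "norm \<dots> \<le> (\<Sum>j\<in>M - L. norm (sg j * q^(pe j)))" by (rule norm_sum)
    also have "\<dots> \<le> (\<Sum>j\<in>M - L. r^(m+1))"
    proof (rule sum_mono)
      fix j assume "j \<in> M - L"
      then have "m + 1 \<le> pe j" unfolding L_def by auto
      then have "r^(pe j) \<le> r^(m+1)" by (rule power_decreasing) (use r in auto)
      then show "norm (sg j * q^(pe j)) \<le> r^(m+1)"
        unfolding r_def by (simp add: norm_mult norm_power norm_sg)
    qed
    also have "\<dots> = real (card (M - L)) * r^(m+1)" by simp
    also have "\<dots> \<le> real (card M) * r^(m+1)"
    proof (rule mult_right_mono)
      have "card (M - L) \<le> card M" by (rule card_mono) (auto simp: M_def)
      then show "real (card (M - L)) \<le> real (card M)" by simp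
      show "0 \<le> r^(m+1)" using r by simp
    qed
    also have "card M = 2 * m + 1" unfolding M_def by simp
    also have "real (2 * m + 1) * r^(m+1) = 2 * r * (real m * r^m) + r * r^m"
      by (simp add: algebra_simps)
    finally show ?thesis .
  qed
  have "(\<lambda>m. 2 * r * (real m * r^m) + r * r^m) \<longlonglongrightarrow> 2 * r * 0 + r * 0"
    by (intro tendsto_intros n_pow_lim r LIMSEQ_realpow_zero) (use r in auto)
  then have "(\<lambda>m. 2 * r * (real m * r^m) + r * r^m) \<longlonglongrightarrow> 0" by simp
  then show ?thesis
    by (rule Lim_null_comparison[rotated]) (use nb in auto)
qed

lemma qpoch_eval:
  fixes q :: complex
  assumes q: "norm q < 1"
  shows "qpoch q q = eval_fps Pf q"
proof -
  have cp0: "convergent_prod (\<lambda>k. 1 + (- (q * q^k)))"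
  proof (rule summable_imp_convergent_prod_complex)
    show "summable (\<lambda>k. norm (- (q * q ^ k)))"
      using q by (simp add: norm_mult norm_power summable_geometric)
    fix k
    have "norm (q * q^k) = norm q ^ Suc k" by (simp add: norm_mult norm_power)
    also have "\<dots> \<le> norm q ^ 1" by (rule power_decreasing) (use q in auto)
    also have "\<dots> < 1" using q by simp
    finally have "norm (q * q^k) < 1" .
    then show "- (q * q ^ k) \<noteq> - 1" by auto
  qed
  then have cp: "convergent_prod (\<lambda>k. 1 - q * q^k)" by simp
  have L1: "(\<lambda>n. \<Prod>i\<in>{1..Suc n}. 1 - q^i) \<longlonglongrightarrow> qpoch q q"
  proof -
    have "(\<lambda>n. \<Prod>i\<le>n. 1 - q * q^i) \<longlonglongrightarrow> qpoch q q"
      unfolding qpoch_def by (rule convergent_prod_LIMSEQ[OF cp])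
    moreover have "(\<Prod>i\<le>n. 1 - q * q^i) = (\<Prod>i\<in>{1..Suc n}. 1 - q^i)" for n
    proof -
      have "(\<Prod>i\<in>{Suc 0..Suc n}. 1 - q^i) = (\<Prod>i\<in>{0..n}. 1 - q^(Suc i))"
        by (rule prod.shift_bounds_cl_Suc_ivl)
      then show ?thesis by (simp add: atMost_atLeast0)
    qed
    ultimately show ?thesis by simp
  qed
  have cr: "ereal (norm q) < fps_conv_radius Pf"
    using conv_ge1[OF Pf_norm] q by (meson ereal_less(3) less_le_trans)
  have L2: "(\<lambda>m. \<Sum>k\<le>m. Pf $ k * q^k) \<longlonglongrightarrow> eval_fps Pf q"
  proof -
    have "(\<lambda>n. \<Sum>k<n. Pf $ k * q^k) \<longlonglongrightarrow> eval_fps Pf q"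
      using sums_eval_fps[OF cr] unfolding sums_def .
    then have "(\<lambda>n. \<Sum>k<Suc n. Pf $ k * q^k) \<longlonglongrightarrow> eval_fps Pf q"
      by (rule LIMSEQ_Suc)
    then show ?thesis by (simp add: lessThan_Suc_atMost)
  qed
  have L3: "(\<lambda>m. (\<Prod>i\<in>{1..m}. 1 - q^i) - (\<Sum>k\<le>m. Pf $ k * q^k)) \<longlonglongrightarrow> 0"
  proof -
    have "(\<lambda>m. (shP m q - (\<Sum>k\<le>m. Pf $ k * q^k)) - (shS m q - (\<Prod>i\<in>{1..m}. 1 - q^i))) \<longlonglongrightarrow> 0 - 0"
      by (rule tendsto_diff[OF partB[OF q] partA[OF q]])
    then show ?thesis by (simp add: shanks)
  qed
  have "(\<lambda>m. (\<Sum>k\<le>m. Pf $ k * q^k) + ((\<Prod>i\<in>{1..m}. 1 - q^i) - (\<Sum>k\<le>m. Pf $ k * q^k))) \<longlonglongrightarrow> eval_fps Pf q + 0"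
    by (rule tendsto_add[OF L2 L3])
  then have "(\<lambda>m. \<Prod>i\<in>{1..m}. 1 - q^i) \<longlonglongrightarrow> eval_fps Pf q" by simp
  then have "(\<lambda>n. \<Prod>i\<in>{1..Suc n}. 1 - q^i) \<longlonglongrightarrow> eval_fps Pf q" by (rule LIMSEQ_Suc)
  then show ?thesis using L1 LIMSEQ_unique by blast
qed

lemma cr_less: "fps_conv_radius F \<ge> 1 \<Longrightarrow> norm z < 1 \<Longrightarrow> ereal (norm z) < fps_conv_radius F"
  by (meson ereal_less(3) less_le_trans)

lemma norm_qk: "norm (q::complex) < 1 \<Longrightarrow> norm (q * q^k) < 1"
proof -
  assume q: "norm q < 1"
  have "norm (q * q^k) = norm q ^ Suc k" by (simp add: norm_mult norm_power)
  also have "\<dots> \<le> norm q ^ 1" by (rule power_decreasing) (use q in auto)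
  also have "\<dots> < 1" using q by simp
  finally show ?thesis .
qed

lemma qpoch_nz:
  fixes q :: complex
  assumes q: "norm q < 1"
  shows "qpoch q q \<noteq> 0"
proof -
  have cp0: "convergent_prod (\<lambda>k. 1 + (- (q * q^k)))"
  proof (rule summable_imp_convergent_prod_complex)
    show "summable (\<lambda>k. norm (- (q * q ^ k)))"
      using q by (simp add: norm_mult norm_power summable_geometric)
    fix k
    show "- (q * q ^ k) \<noteq> - 1" using norm_qk[OF q, of k] by auto
  qed
  then have cp: "convergent_prod (\<lambda>k. 1 - q * q^k)" by simp
  have "1 - q * q^k \<noteq> 0" for k using norm_qk[OF q, of k] by auto
  then show ?thesis unfolding qpoch_def by (rule prodinf_nonzero[OF cp])
qed

lemma cr_Pf: "fps_conv_radius Pf \<ge> 1" by (rule conv_ge1[OF Pf_norm])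
lemma cr_G: "fps_conv_radius (dil3 Pf) \<ge> 1" by (rule conv_ge1[OF dil3_norm[OF Pf_norm]])

lemma evG: "norm q < 1 \<Longrightarrow> eval_fps (dil3 Pf) q = qpoch (q^3) (q^3)"
proof -
  assume q: "norm q < 1"
  have "norm (q^3) < 1" using q by (simp add: norm_power power_less_one_iff)
  then show ?thesis using eval_dil3[OF cr_Pf q] qpoch_eval by simp
qed

lemma main_fps:
  fixes a :: "nat \<Rightarrow> real"
  assumes hyp: "\<forall>q::complex. norm q < 1 \<longrightarrow>
      (\<lambda>n. complex_of_real (a n) * q ^ n) sums (qpoch q q ^ 3 / qpoch (q ^ 3) (q ^ 3) ^ 2)"
  shows "Abs_fps (\<lambda>n. complex_of_real (a n)) = dil3 (Aq * Ip) - fps_X * dil3 (Cq * Ip)"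
proof -
  define Ac where "Ac = Abs_fps (\<lambda>n. complex_of_real (a n))"
  define G where "G = dil3 Pf"
  have hA: "(\<lambda>n. Ac $ n * q ^ n) sums (qpoch q q ^ 3 / qpoch (q ^ 3) (q ^ 3) ^ 2)" if "norm q < 1" for q
    using hyp that unfolding Ac_def by simp
  have crA: "fps_conv_radius Ac \<ge> 1"
    unfolding fps_conv_radius_def
  proof (rule conv_radius_geI_ex')
    fix r :: real assume "0 < r" "ereal r < 1"
    then have "norm (of_real r :: complex) < 1" by simp
    then show "summable (\<lambda>n. Ac $ n * of_real r ^ n)" using hA sums_summable by blast
  qed
  have crAG: "fps_conv_radius (Ac * G^2) \<ge> 1"
    using fps_conv_radius_mult[of Ac "G^2"] fps_conv_radius_power[of G 2] crA cr_G unfolding G_def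
    by (smt (verit) min_def order_trans)
  have crP3: "fps_conv_radius (Pf^3) \<ge> 1"
    using fps_conv_radius_power[of Pf 3] cr_Pf by (meson order_trans)
  have ev: "eval_fps (Ac * G^2) z = eval_fps (Pf^3) z" if z: "z \<in> ball 0 1" for z
  proof -
    have nz: "norm z < 1" using z by simp
    have z3: "norm (z^3) < 1" using nz by (simp add: norm_power power_less_one_iff)
    have eA: "eval_fps Ac z = qpoch z z ^ 3 / qpoch (z ^ 3) (z ^ 3) ^ 2"
      unfolding eval_fps_def by (rule sums_unique[symmetric, OF hA[OF nz]])
    have "eval_fps (Ac * G^2) z = eval_fps Ac z * eval_fps G z ^ 2"
      using cr_less[OF crA nz] cr_less[OF cr_G nz] cr_less[OF fps_conv_radius_power[THEN order_trans[OF cr_G]] nz]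
      unfolding G_def by (simp add: eval_fps_mult eval_fps_power)
    also have "\<dots> = qpoch z z ^ 3"
      unfolding eA G_def evG[OF nz] using qpoch_nz[OF z3] by simp
    also have "\<dots> = eval_fps (Pf^3) z"
      using cr_less[OF cr_Pf nz] by (simp add: eval_fps_power qpoch_eval[OF nz])
    finally show ?thesis .
  qed
  have key: "Ac * G^2 = Pf^3"
  proof (rule eval_fps_eqD)
    show "fps_conv_radius (Ac * G^2) > 0" by (rule less_le_trans[OF _ crAG]) simp
    show "fps_conv_radius (Pf^3) > 0" by (rule less_le_trans[OF _ crP3]) simp
    have "eventually (\<lambda>z. z \<in> ball (0::complex) 1) (nhds 0)"
      by (rule eventually_nhds_in_open) auto
    then show "eventually (\<lambda>z. eval_fps (Ac * G^2) z = eval_fps (Pf^3) z) (nhds 0)"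
      by (rule eventually_mono) (rule ev)
  qed
  define R where "R = dil3 Aq - fps_X * dil3 Cq"
  have "Pf^3 = G * R" unfolding dissect R_def G_def by (simp add: algebra_simps)
  with key have "G * (Ac * G) = G * R" by (simp add: power2_eq_square algebra_simps)
  moreover have "G \<noteq> 0"
  proof
    assume "G = 0"
    then have "G $ 0 = 0" by simp
    then show False unfolding G_def by (simp add: dil3_nth Pf_0)
  qed
  ultimately have AG: "Ac * G = R" by simp
  have GI: "G * dil3 Ip = 1" unfolding G_def dil3_mult Pf_Ip dil3_1 ..
  have "Ac = (Ac * G) * dil3 Ip" using GI by (simp add: mult.assoc)
  also have "\<dots> = dil3 (Aq * Ip) - fps_X * dil3 (Cq * Ip)"
    unfolding AG R_def by (simp add: algebra_simps dil3_mult[symmetric])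
  finally show ?thesis unfolding Ac_def .
qed

theorem theorem1p3:
  fixes a :: "nat \<Rightarrow> real"
  assumes "\<forall>q::complex. norm q < 1 \<longrightarrow>
      (\<lambda>n. complex_of_real (a n) * q ^ n) sums (qpoch q q ^ 3 / qpoch (q ^ 3) (q ^ 3) ^ 2)"
  shows "\<forall>n. (n mod 3 = 0 \<longrightarrow> a n > 0) \<and> (n mod 3 = 1 \<longrightarrow> a n < 0) \<and> (n mod 3 = 2 \<longrightarrow> a n = 0)"
proof (intro allI conjI impI)
  fix n :: nat
  have c: "complex_of_real (a n) = dil3 (Aq * Ip) $ n - (if n = 0 then 0 else dil3 (Cq * Ip) $ (n - 1))"
    using arg_cong[OF main_fps[OF assms], of "\<lambda>F. F $ n"] by simp
  {
    assume n: "n mod 3 = 0"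
    obtain N where N: "N \<ge> 1" "(Aq * Ip) $ (n div 3) = of_nat N"
      using pos_coeff[OF ffib_Qa, of "n div 3"] unfolding Aq_def by (auto simp: Qa_def)
    have "\<not> 3 dvd (n - 1)" if "n \<noteq> 0" using n that by presburger
    then have "complex_of_real (a n) = of_nat N" using c n N by (auto simp: dil3_nth)
    then have "a n = real N" by (metis of_real_eq_iff of_real_of_nat_eq)
    then show "a n > 0" using N by simp
  next
    assume n: "n mod 3 = 1"
    obtain N where N: "N \<ge> 1" "(Cq * Ip) $ ((n - 1) div 3) = of_nat N"
      using pos_coeff[OF ffib_Qc, of "(n - 1) div 3"] unfolding Cq_def by (auto simp: Qc_def)
    have "\<not> 3 dvd n" "n \<noteq> 0" "3 dvd (n - 1)" using n by presburger+
    then have "complex_of_real (a n) = - of_nat N" using c N by (auto simp: dil3_nth)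
    then have "a n = - real N" by (metis of_real_eq_iff of_real_of_nat_eq of_real_minus)
    then show "a n < 0" using N by simp
  next
    assume n: "n mod 3 = 2"
    have "\<not> 3 dvd n" "n \<noteq> 0" "\<not> 3 dvd (n - 1)" using n by presburger+
    then have "complex_of_real (a n) = 0" using c by (auto simp: dil3_nth)
    then show "a n = 0" by simp
  }
qed

end
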